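(* Let $E^3=\{000,011,101,110\}$ and fix $u=u_1u_2u_3\in E^3$. Let $n\ge 1$. Alice, Bob and Carol receive $X=(x_1,\dots,x_n)$, $Y=(y_1,\dots,y_n)$, $Z=(z_1,\dots,z_n)\in\{0,1\}^n$ respectively, under the promise that $x_iy_iz_i\in E^3$ (i.e. $x_i\oplus y_i\oplus z_i=0$) for every $1\le i\le n$. Define $f_u(X,Y,Z)=\bigoplus_{i=1}^n t_u(x_iy_iz_i)$, where $t_u(w)=1$ if $w=u$ and $t_u(w)=0$ otherwise. Suppose the three parties share $n$ copies of the three-qubit state $|\psi_3\rangle=\frac12(|000\rangle-|011\rangle-|101\rangle-|110\rangle)$, the first, second and third qubit of the $i$-th copy being held by Alice, Bob and Carol respectively. Then there is a protocol computing $f_u$ in which the only quantum operations are the following: for each $i$, each party applies to its qubit of the $i$-th copy the Hadamard gate $H$ if its $i$-th input bit differs from the corresponding bit of $u$ and the identity $I$ otherwise (so that the three-qubit operation on the $i$-th copy is $III$, $IHH$, $HIH$, $HHI$ according as $u\oplus x_iy_iz_i$ equals $000,011,101,110$), followed by a measurement of each qubit in the computational basis; after local classical computation, Bob and Carol each send one classical bit to Alice (two classical bits in total), and Alice then outputs $f_u(X,Y,Z)$ correctly for every input satisfying the promise.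
   Context: $H$ denotes the one-qubit Hadamard gate $H|0\rangle=(|0\rangle+|1\rangle)/\sqrt2$, $H|1\rangle=(|0\rangle-|1\rangle)/\sqrt2$, and $I$ the identity. A three-letter word such as $IHH$ denotes the tensor product of the listed one-qubit operations applied to the first, second and third qubit respectively. In the communication model, parties may perform arbitrary local operations on their own qubits and classical data, but communicate only by sending classical bits to Alice; no quantum communication is allowed. *)

theory Defs
  imports Complex_Main
begin

text \<open>Bits are modelled as bool (False = 0, True = 1); xor is (\<noteq>).
  A three-bit word x y z lies in E^3 iff x xor y xor z = 0.\<close>

definition inE3 :: "bool \<Rightarrow> bool \<Rightarrow> bool \<Rightarrow> bool" where
  "inE3 a b c \<longleftrightarrow> ((a \<noteq> b) \<noteq> c) = False"

definition f_u :: "bool \<times> bool \<times> bool \<Rightarrow> nat \<Rightarrow> (nat \<Rightarrow> bool) \<Rightarrow> (nat \<Rightarrow> bool) \<Rightarrow> (nat \<Rightarrow> bool) \<Rightarrow> bool" where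
  "f_u u n X Y Z = odd (card {i. i < n \<and> (X i, Y i, Z i) = u})"

definition psi3 :: "bool \<Rightarrow> bool \<Rightarrow> bool \<Rightarrow> real" where
  "psi3 a b c = (if (a, b, c) = (False, False, False) then 1/2
                 else if inE3 a b c then - 1/2 else 0)"

text \<open>Matrix entries <out| G |in> of the one-qubit gates H and I.\<close>
definition hadamard :: "bool \<Rightarrow> bool \<Rightarrow> real" where
  "hadamard out inp = (if out \<and> inp then - 1 / sqrt 2 else 1 / sqrt 2)"

definition ident :: "bool \<Rightarrow> bool \<Rightarrow> real" where
  "ident out inp = (if out = inp then 1 else 0)"

definition gate :: "bool \<Rightarrow> bool \<Rightarrow> bool \<Rightarrow> real" where
  "gate h = (if h then hadamard else ident)"

definition amp3 :: "bool \<Rightarrow> bool \<Rightarrow> bool \<Rightarrow> bool \<Rightarrow> bool \<Rightarrow> bool \<Rightarrow> real" where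
  "amp3 h1 h2 h3 o1 o2 o3 =
     (\<Sum>w1\<in>UNIV. \<Sum>w2\<in>UNIV. \<Sum>w3\<in>UNIV.
        gate h1 o1 w1 * gate h2 o2 w2 * gate h3 o3 w3 * psi3 w1 w2 w3)"

text \<open>The n copies form a product state,
  so the joint amplitude is the product of the per-copy amplitudes.\<close>
definition outcome_prob ::
  "bool \<times> bool \<times> bool \<Rightarrow> nat \<Rightarrow> (nat \<Rightarrow> bool) \<Rightarrow> (nat \<Rightarrow> bool) \<Rightarrow> (nat \<Rightarrow> bool)
   \<Rightarrow> (nat \<Rightarrow> bool) \<Rightarrow> (nat \<Rightarrow> bool) \<Rightarrow> (nat \<Rightarrow> bool) \<Rightarrow> real" where
  "outcome_prob u n X Y Z A B C =
     (\<Prod>i<n. (amp3 (X i \<noteq> fst u) (Y i \<noteq> fst (snd u)) (Z i \<noteq> snd (snd u))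
                   (A i) (B i) (C i))\<^sup>2)"

end

theory Submission
  imports Defs
begin

fun pr :: "nat \<Rightarrow> (nat \<Rightarrow> bool) \<Rightarrow> bool" where
  "pr 0 P = False"
| "pr (Suc n) P = (pr n P \<noteq> P n)"

lemma pr_card: "pr n P = odd (card {i. i < n \<and> P i})"
proof (induction n)
  case 0 then show ?case by simp
next
  case (Suc n)
  have e: "{i. i < Suc n \<and> P i} = (if P n then insert n {i. i < n \<and> P i} else {i. i < n \<and> P i})"
    by (auto simp: less_Suc_eq)
  show ?case using Suc by (simp add: e)
qed

lemma pr_xor: "pr n (\<lambda>i. P i \<noteq> Q i) = (pr n P \<noteq> pr n Q)"
  by (induction n) auto

lemma pr_not: "pr n (\<lambda>i. \<not> P i) = (odd n \<noteq> pr n P)"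
  by (induction n) auto

lemma pr_cong: "(\<And>i. i < n \<Longrightarrow> P i = Q i) \<Longrightarrow> pr n P = pr n Q"
  by (induction n) auto

lemma s2: "sqrt 2 * sqrt 2 = (2::real)" by simp

lemma local_lemma:
  assumes "inE3 x y z" "inE3 u1 u2 u3"
    and "amp3 (x \<noteq> u1) (y \<noteq> u2) (z \<noteq> u3) a b c \<noteq> 0"
  shows "((x, y, z) = (u1, u2, u3)) = (\<not> ((a \<noteq> b) \<noteq> c))"
  using assms
  apply (cases x; cases y; cases z; cases u1; cases u2; cases u3; cases a; cases b; cases c)
  apply (simp_all add: inE3_def amp3_def UNIV_bool gate_def hadamard_def ident_def psi3_def field_simps)
  done

theorem theorem1:
  fixes u :: "bool \<times> bool \<times> bool" and n :: nat
  assumes "inE3 (fst u) (fst (snd u)) (snd (snd u))"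
    and "n \<ge> 1"
  shows "\<exists>(gB :: (nat \<Rightarrow> bool) \<Rightarrow> (nat \<Rightarrow> bool) \<Rightarrow> bool)
           (gC :: (nat \<Rightarrow> bool) \<Rightarrow> (nat \<Rightarrow> bool) \<Rightarrow> bool)
           (gA :: (nat \<Rightarrow> bool) \<Rightarrow> (nat \<Rightarrow> bool) \<Rightarrow> bool \<Rightarrow> bool \<Rightarrow> bool).
           \<forall>X Y Z A B C.
             (\<forall>i<n. inE3 (X i) (Y i) (Z i)) \<longrightarrow>
             outcome_prob u n X Y Z A B C > 0 \<longrightarrow>
             gA X A (gB Y B) (gC Z C) = f_u u n X Y Z"
proof (intro exI allI impI)
  fix X Y Z A B C :: "nat \<Rightarrow> bool"
  assume E: "\<forall>i<n. inE3 (X i) (Y i) (Z i)" and P: "outcome_prob u n X Y Z A B C > 0"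
  obtain u1 u2 u3 where u: "u = (u1, u2, u3)" by (cases u) auto
  have nz: "amp3 (X i \<noteq> u1) (Y i \<noteq> u2) (Z i \<noteq> u3) (A i) (B i) (C i) \<noteq> 0" if "i < n" for i
  proof
    assume "amp3 (X i \<noteq> u1) (Y i \<noteq> u2) (Z i \<noteq> u3) (A i) (B i) (C i) = 0"
    then have "outcome_prob u n X Y Z A B C = 0"
      unfolding outcome_prob_def u using that by (auto intro!: prod_zero)
    with P show False by simp
  qed
  have "f_u u n X Y Z = pr n (\<lambda>i. (X i, Y i, Z i) = u)"
    by (simp add: f_u_def pr_card)
  also have "\<dots> = pr n (\<lambda>i. \<not> ((A i \<noteq> B i) \<noteq> C i))"
    apply (rule pr_cong)
    using local_lemma[OF _ _ nz] E assms(1) u by auto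
  also have "\<dots> = (odd n \<noteq> ((pr n A \<noteq> pr n B) \<noteq> pr n C))"
    using pr_not[of n "\<lambda>i. (A i \<noteq> B i) \<noteq> C i"] pr_xor[of n "\<lambda>i. A i \<noteq> B i" C] pr_xor[of n A B]
    by auto
  finally show "(\<lambda>X A b c. odd n \<noteq> ((pr n A \<noteq> b) \<noteq> c)) X A ((\<lambda>Y B. pr n B) Y B) ((\<lambda>Z C. pr n C) Z C) = f_u u n X Y Z"
    by simp
qed

end
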